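(* Let $C\subseteq\mathbb{F}_2^n$ be a code. Then: (1) $|C|\le 2^{\,n-\lceil 2\delta(C)/(\gamma+1)\rceil+1}$; (2) $|C|\le \dfrac{2^n}{\sum_{i=0}^t\binom ni}$, where $t$ is the largest integer with $t<\delta(C)/(\gamma+1)$; (3) if $d:=\lceil 2\delta(C)/(\gamma+1)\rceil$ satisfies $2d>n$, then $|C|\le\left\lfloor\frac{2d}{2d-n}\right\rfloor$.
   Context: Let $n\ge2$ and fix reals $0<p\le q<1/2$. Let $\gamma:=\log_{q/(1-p)}\left(\frac{p}{1-q}\right)$. For $a,b\in\{0,1\}$, $d_{ab}(y,x)=|\{i: y_i=a,\ x_i=b\}|$; discrepancy $\delta(y,x):=\gamma\,d_{10}(y,x)+d_{01}(y,x)$. A code is $C\subseteq\mathbb{F}_2^n$ with $|C|\ge2$, and $\delta(C)=\min\{\delta(x,x'):x,x'\in C,\ x\ne x'\}$. *)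

theory Defs
  imports "HOL-Analysis.Analysis"
begin

text \<open>Binary words of length n are represented as lists of booleans of length n
  (True = 1, False = 0).\<close>

definition words :: "nat \<Rightarrow> bool list set" where
  "words n = {x. length x = n}"

definition dab :: "bool \<Rightarrow> bool \<Rightarrow> bool list \<Rightarrow> bool list \<Rightarrow> nat" where
  "dab a b y x = card {i. i < length y \<and> y ! i = a \<and> x ! i = b}"

definition gamma :: "real \<Rightarrow> real \<Rightarrow> real" where
  "gamma p q = log (q / (1 - p)) (p / (1 - q))"

definition discrepancy :: "real \<Rightarrow> real \<Rightarrow> bool list \<Rightarrow> bool list \<Rightarrow> real" where
  "discrepancy p q y x = gamma p q * real (dab True False y x) + real (dab False True y x)"

definition code_discrepancy :: "real \<Rightarrow> real \<Rightarrow> bool list set \<Rightarrow> real" where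
  "code_discrepancy p q C = Min {discrepancy p q x x' | x x'. x \<in> C \<and> x' \<in> C \<and> x \<noteq> x'}"

end

theory Submission
  imports Defs begin

definition hamd :: "bool list \<Rightarrow> bool list \<Rightarrow> nat" where
  "hamd x y = card {i. i < length x \<and> x!i \<noteq> y!i}"

lemma words_finite: "finite (words n)"
  unfolding words_def using finite_lists_length_eq[of "UNIV::bool set" n] by simp

lemma card_words: "card (words n) = 2 ^ n"
  unfolding words_def using card_lists_length_eq[of "UNIV::bool set" n] by simp

lemma hamd_sum: "hamd x y = (\<Sum>i<length x. if x!i \<noteq> y!i then 1 else 0)"
proof -
  have "{i. i < length x \<and> x!i \<noteq> y!i} = {i\<in>{..<length x}. x!i \<noteq> y!i}" by auto
  then show ?thesis unfolding hamd_def by (simp add: sum.inter_filter[symmetric])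
qed

lemma hamd_Cons: "hamd (a#x) (b#y) = (if a \<noteq> b then 1 else 0) + hamd x y"
  unfolding hamd_sum length_Cons sum.lessThan_Suc_shift by simp

lemma hamd_dab: "length x = length y \<Longrightarrow> dab True False x y + dab False True x y = hamd x y"
proof -
  assume l: "length x = length y"
  have e: "{i. i < length x \<and> x!i \<noteq> y!i} = {i. i < length x \<and> x ! i = True \<and> y ! i = False} \<union> {i. i < length x \<and> x ! i = False \<and> y ! i = True}"
    by auto
  have "card ({i. i < length x \<and> x ! i = True \<and> y ! i = False} \<union> {i. i < length x \<and> x ! i = False \<and> y ! i = True})
     = card {i. i < length x \<and> x ! i = True \<and> y ! i = False} + card {i. i < length x \<and> x ! i = False \<and> y ! i = True}"
    by (rule card_Un_disjoint) auto
  then show ?thesis unfolding dab_def hamd_def e by simp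
qed

lemma dab_swap: "length x = length y \<Longrightarrow> dab True False y x = dab False True x y"
  unfolding dab_def by (metis (mono_tags, lifting))

lemma hamd_pos: "length x = length y \<Longrightarrow> x \<noteq> y \<Longrightarrow> hamd x y \<ge> 1"
proof -
  assume l: "length x = length y" and ne: "x \<noteq> y"
  then obtain i where i: "i < length x" "x!i \<noteq> y!i" using nth_equalityI by blast
  have "finite {i. i < length x \<and> x!i \<noteq> y!i}" by simp
  moreover have "i \<in> {i. i < length x \<and> x!i \<noteq> y!i}" using i by simp
  ultimately show ?thesis unfolding hamd_def
    by (metis One_nat_def Suc_leI card_gt_0_iff empty_iff)
qed

lemma hamd_le: "hamd x y \<le> length x"
proof -
  have "card {i. i < length x \<and> x!i \<noteq> y!i} \<le> card {..<length x}" by (rule card_mono) auto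
  then show ?thesis unfolding hamd_def by simp
qed

lemma hamd_sym: "length x = length y \<Longrightarrow> hamd x y = hamd y x"
  unfolding hamd_def by (metis)

lemma hamd_tri: "length x = length y \<Longrightarrow> length y = length z \<Longrightarrow> hamd x z \<le> hamd x y + hamd y z"
proof -
  assume l: "length x = length y" "length y = length z"
  have "hamd x z = (\<Sum>i<length x. if x!i \<noteq> z!i then 1 else 0)" by (rule hamd_sum)
  also have "\<dots> \<le> (\<Sum>i<length x. (if x!i \<noteq> y!i then 1 else 0) + (if y!i \<noteq> z!i then 1 else 0))"
    by (rule sum_mono) auto
  also have "\<dots> = hamd x y + hamd y z" using l by (simp add: hamd_sum sum.distrib)
  finally show ?thesis .
qed

lemma sphere_card: "card {y. length y = length x \<and> hamd x y = k} = length x choose k"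
proof (induction x arbitrary: k)
  case Nil
  have "{y. length y = length ([]::bool list) \<and> hamd [] y = k} = (if k = 0 then {[]} else {})"
    by (auto simp: hamd_def)
  then show ?case by simp
next
  case (Cons a xs)
  define S where "S j = {ys. length ys = length xs \<and> hamd xs ys = j}" for j
  have inj: "inj (\<lambda>ys. b # ys)" for b :: bool by (simp add: inj_def)
  show ?case
  proof (cases k)
    case 0
    have "{y. length y = length (a#xs) \<and> hamd (a#xs) y = k} = (\<lambda>ys. a#ys) ` S 0"
      unfolding S_def 0 by (auto simp: length_Suc_conv hamd_Cons split: if_splits)
    then show ?thesis using Cons.IH[of 0] unfolding S_def 0
      by (simp add: card_image inj)
  next
    case (Suc j)
    have "{y. length y = length (a#xs) \<and> hamd (a#xs) y = k} = (\<lambda>ys. a#ys) ` S k \<union> (\<lambda>ys. (\<not>a)#ys) ` S j"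
      unfolding S_def Suc by (auto simp: length_Suc_conv hamd_Cons split: if_splits)
    moreover have "card ((\<lambda>ys. a#ys) ` S k \<union> (\<lambda>ys. (\<not>a)#ys) ` S j) = card ((\<lambda>ys. a#ys) ` S k) + card ((\<lambda>ys. (\<not>a)#ys) ` S j)"
      by (rule card_Un_disjoint) (auto simp: S_def intro!: finite_imageI finite_lists_length_eq[of UNIV, simplified])
    ultimately show ?thesis using Cons.IH[of k] Cons.IH[of j] unfolding S_def Suc
      by (simp add: card_image inj)
  qed
qed

lemma ball_card: "card {y. length y = length x \<and> hamd x y \<le> t} = (\<Sum>i=0..t. length x choose i)"
proof (induction t)
  case 0
  then show ?case using sphere_card[of x 0] by simp
next
  case (Suc t)
  have e: "{y. length y = length x \<and> hamd x y \<le> Suc t} = {y. length y = length x \<and> hamd x y \<le> t} \<union> {y. length y = length x \<and> hamd x y = Suc t}"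
    by auto
  have "card ({y. length y = length x \<and> hamd x y \<le> t} \<union> {y. length y = length x \<and> hamd x y = Suc t}) =
     card {y. length y = length x \<and> hamd x y \<le> t} + card {y. length y = length x \<and> hamd x y = Suc t}"
    by (rule card_Un_disjoint) (auto intro: rev_finite_subset[OF finite_lists_length_eq[of UNIV "length x", simplified]])
  then show ?case using Suc sphere_card[of x "Suc t"] unfolding e by simp
qed

lemma singleton_bound:
  assumes C: "C \<subseteq> words n" and d: "1 \<le> d" "d \<le> n"
    and dist: "\<And>x y. x \<in> C \<Longrightarrow> y \<in> C \<Longrightarrow> x \<noteq> y \<Longrightarrow> d \<le> hamd x y"
  shows "card C \<le> 2 ^ (n + 1 - d)"
proof -
  define k where "k = n + 1 - d"
  have inj: "inj_on (take k) C"
  proof (rule inj_onI, rule ccontr)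
    fix x y assume xy: "x \<in> C" "y \<in> C" "take k x = take k y" "x \<noteq> y"
    have l: "length x = n" "length y = n" using xy C by (auto simp: words_def)
    have "{i. i < length x \<and> x!i \<noteq> y!i} \<subseteq> {k..<n}"
    proof
      fix i assume i: "i \<in> {i. i < length x \<and> x!i \<noteq> y!i}"
      have "\<not> i < k"
      proof
        assume "i < k"
        then have "take k x ! i = x ! i" "take k y ! i = y ! i" by auto
        then show False using i xy(3) by auto
      qed
      then show "i \<in> {k..<n}" using i l by auto
    qed
    then have "hamd x y \<le> card {k..<n}" unfolding hamd_def by (rule card_mono[rotated]) auto
    then have "hamd x y \<le> n - k" by simp
    moreover have "d \<le> hamd x y" using dist xy by auto
    ultimately show False using d unfolding k_def by linarith
  qed
  have "take k ` C \<subseteq> words k" using C d unfolding words_def k_def by auto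
  then have "card (take k ` C) \<le> card (words k)" by (rule card_mono[OF words_finite])
  then show ?thesis using card_image[OF inj] by (simp add: card_words k_def)
qed

lemma hamming_bound:
  assumes C: "C \<subseteq> words n"
    and dist: "\<And>x y. x \<in> C \<Longrightarrow> y \<in> C \<Longrightarrow> x \<noteq> y \<Longrightarrow> 2 * t < hamd x y"
  shows "card C * (\<Sum>i=0..t. n choose i) \<le> 2 ^ n"
proof -
  define B where "B x = {y. length y = length x \<and> hamd x y \<le> t}" for x
  have fC: "finite C" using C words_finite finite_subset by blast
  have fB: "finite (B x)" for x unfolding B_def
    by (rule rev_finite_subset[OF finite_lists_length_eq[of UNIV "length x", simplified]]) auto
  have disj: "B x \<inter> B y = {}" if "x \<in> C" "y \<in> C" "x \<noteq> y" for x y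
  proof (rule ccontr)
    assume "B x \<inter> B y \<noteq> {}"
    then obtain z where z: "z \<in> B x" "z \<in> B y" by blast
    have l: "length x = n" "length y = n" using that C by (auto simp: words_def)
    have "hamd x y \<le> hamd x z + hamd z y"
      using z l by (intro hamd_tri) (auto simp: B_def)
    also have "hamd z y = hamd y z" using z l by (intro hamd_sym) (auto simp: B_def)
    finally have "hamd x y \<le> 2 * t" using z by (auto simp: B_def)
    then show False using dist[OF that] by simp
  qed
  have "card (\<Union>x\<in>C. B x) = (\<Sum>x\<in>C. card (B x))"
    by (rule card_UN_disjoint[OF fC]) (use fB disj in auto)
  also have "\<dots> = (\<Sum>x\<in>C. (\<Sum>i=0..t. n choose i))"
  proof (rule sum.cong[OF refl])
    fix x assume "x \<in> C"
    then have "length x = n" using C by (auto simp: words_def)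
    then show "card (B x) = (\<Sum>i=0..t. n choose i)" unfolding B_def using ball_card[of x t] by simp
  qed
  also have "\<dots> = card C * (\<Sum>i=0..t. n choose i)" by simp
  finally have e: "card (\<Union>x\<in>C. B x) = card C * (\<Sum>i=0..t. n choose i)" .
  have "(\<Union>x\<in>C. B x) \<subseteq> words n" using C by (auto simp: B_def words_def)
  then have "card (\<Union>x\<in>C. B x) \<le> 2 ^ n" using card_mono[OF words_finite] card_words by metis
  then show ?thesis using e by simp
qed

lemma plotkin_bound:
  assumes C: "C \<subseteq> words n"
    and dist: "\<And>x y. x \<in> C \<Longrightarrow> y \<in> C \<Longrightarrow> x \<noteq> y \<Longrightarrow> d \<le> real (hamd x y)"
  shows "real (card C) * (real (card C) - 1) * d \<le> real n * real (card C) ^ 2 / 2"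
proof -
  define M where "M = real (card C)"
  have fC: "finite C" using C words_finite finite_subset by blast
  define u where "u x i = (if x ! i then 1 else 0::real)" for x :: "bool list" and i
  have low: "(M - 1) * d \<le> (\<Sum>y\<in>C. real (hamd x y))" if x: "x \<in> C" for x
  proof -
    have e1: "(\<Sum>y\<in>C. real (hamd x y)) = real (hamd x x) + (\<Sum>y\<in>C-{x}. real (hamd x y))"
      using fC x by (simp add: sum.remove)
    have e2: "real (hamd x x) = 0" by (simp add: hamd_def)
    have e3: "(\<Sum>y\<in>C-{x}. d) \<le> (\<Sum>y\<in>C-{x}. real (hamd x y))"
      by (rule sum_mono) (use dist x in auto)
    have "card C = Suc (card (C - {x}))" using fC x by (rule card.remove)
    then have "M - 1 = real (card (C - {x}))" by (simp add: M_def)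
    then show ?thesis using e1 e2 e3 by (simp add: mult.commute)
  qed
  have hsum: "real (hamd x y) = (\<Sum>i<n. u x i + u y i - 2 * u x i * u y i)" if "x \<in> C" "y \<in> C" for x y
  proof -
    have "length x = n" using that C by (auto simp: words_def)
    then show ?thesis unfolding hamd_sum u_def of_nat_sum by (intro sum.cong) auto
  qed
  have col: "(\<Sum>x\<in>C. \<Sum>y\<in>C. u x i + u y i - 2 * u x i * u y i) \<le> M ^ 2 / 2" for i
  proof -
    define w where "w = (\<Sum>x\<in>C. u x i)"
    have "(\<Sum>x\<in>C. \<Sum>y\<in>C. u x i + u y i - 2 * u x i * u y i) = (\<Sum>x\<in>C. M * u x i + w - 2 * u x i * w)"
      by (simp add: sum.distrib sum_subtractf sum_distrib_left sum_distrib_right w_def M_def)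
    also have "\<dots> = M * w + M * w - 2 * w * w"
      by (simp add: sum.distrib sum_subtractf sum_distrib_left sum_distrib_right w_def M_def mult.assoc) (subst sum.swap, simp add: mult.commute)
    also have "\<dots> \<le> M ^ 2 / 2"
    proof -
      have "0 \<le> (M - 2 * w) ^ 2" by simp
      then show ?thesis by (simp add: power2_eq_square algebra_simps)
    qed
    finally show ?thesis .
  qed
  have "M * ((M - 1) * d) \<le> (\<Sum>x\<in>C. \<Sum>y\<in>C. real (hamd x y))"
    using sum_mono[of C "\<lambda>x. (M - 1) * d", OF low] by (simp add: M_def)
  also have "\<dots> = (\<Sum>x\<in>C. \<Sum>y\<in>C. \<Sum>i<n. u x i + u y i - 2 * u x i * u y i)"
    by (intro sum.cong refl) (simp add: hsum)
  also have "\<dots> = (\<Sum>i<n. \<Sum>x\<in>C. \<Sum>y\<in>C. u x i + u y i - 2 * u x i * u y i)"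
    by (subst sum.swap, rule sum.cong[OF refl], rule sum.swap)
  also have "\<dots> \<le> (\<Sum>i<n. M ^ 2 / 2)" by (rule sum_mono) (rule col)
  also have "\<dots> = real n * M ^ 2 / 2" by simp
  finally show ?thesis unfolding M_def by (simp add: mult.assoc)
qed

lemma gamma_ge1:
  assumes hp: "0 < p" and hpq: "p \<le> q" and hq: "q < 1/2"
  shows "gamma p q \<ge> 1"
proof -
  define a where "a = p / (1 - q)"
  define b where "b = q / (1 - p)"
  have a0: "0 < a" using hp hq by (simp add: a_def)
  have ab: "a \<le> b"
  proof -
    have "p * (1 - p) \<le> q * (1 - q)"
    proof -
      have "0 \<le> (q - p) * (1 - p - q)" using hpq hq hp by (intro mult_nonneg_nonneg) auto
      then show ?thesis by (simp add: algebra_simps)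
    qed
    then show ?thesis unfolding a_def b_def using hp hq hpq by (simp add: divide_simps mult.commute)
  qed
  have b1: "b < 1" using hp hq hpq by (simp add: b_def divide_simps)
  have lb: "ln b < 0" using b1 a0 ab by simp
  have lab: "ln a \<le> ln b" using a0 ab by simp
  have "gamma p q = ln a / ln b" unfolding gamma_def a_def b_def log_def by simp
  also have "\<dots> \<ge> 1" using lb lab by (simp add: le_divide_eq)
  finally show ?thesis .
qed

theorem mainTheorem12:
  fixes n :: nat and p q :: real and C :: "bool list set"
  assumes hn: "n \<ge> 2"
    and hp: "0 < p" and hpq: "p \<le> q" and hq: "q < 1/2"
    and hC: "C \<subseteq> words n" and hC2: "card C \<ge> 2"
  shows "real (card C) \<le> 2 powr (real n - of_int \<lceil>2 * code_discrepancy p q C / (gamma p q + 1)\<rceil> + 1)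
    \<and> (\<forall>t::int. t < code_discrepancy p q C / (gamma p q + 1) \<and>
           (\<forall>s::int. s < code_discrepancy p q C / (gamma p q + 1) \<longrightarrow> s \<le> t) \<longrightarrow>
           real (card C) \<le> 2 ^ n / (\<Sum>i=0..nat t. real (n choose i)))
    \<and> (let d = \<lceil>2 * code_discrepancy p q C / (gamma p q + 1)\<rceil> in 2 * d > int n \<longrightarrow>
           real (card C) \<le> of_int \<lfloor>real_of_int (2 * d) / real_of_int (2 * d - int n)\<rfloor>)"
proof -
  define G where "G = gamma p q"
  define \<delta> where "\<delta> = code_discrepancy p q C"
  have G1: "G \<ge> 1" unfolding G_def using gamma_ge1[OF hp hpq hq] .
  have fC: "finite C" using hC words_finite finite_subset by blast
  have len: "\<And>x. x \<in> C \<Longrightarrow> length x = n" using hC by (auto simp: words_def)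
  obtain x0 y0 where xy0: "x0 \<in> C" "y0 \<in> C" "x0 \<noteq> y0"
  proof -
    have "1 < card C" using hC2 by simp
    then show ?thesis using that using card_le_Suc0_iff_eq[OF fC] by (metis not_le One_nat_def)
  qed
  define P where "P = {(x, x'). x \<in> C \<and> x' \<in> C \<and> x \<noteq> x'}"
  have Seq: "{discrepancy p q x x' | x x'. x \<in> C \<and> x' \<in> C \<and> x \<noteq> x'} = (\<lambda>(x, x'). discrepancy p q x x') ` P"
    unfolding P_def by auto
  have fP: "finite P" unfolding P_def
    by (rule finite_subset[OF _ finite_cartesian_product[OF fC fC]]) auto
  have dd: "\<delta> = Min ((\<lambda>(x, x'). discrepancy p q x x') ` P)"
    unfolding \<delta>_def code_discrepancy_def Seq ..
  have ne: "P \<noteq> {}" using xy0 unfolding P_def by auto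
  have dle: "\<delta> \<le> discrepancy p q x y" if "x \<in> C" "y \<in> C" "x \<noteq> y" for x y
    unfolding dd using that fP by (intro Min_le) (auto simp: P_def)
  have dsum: "discrepancy p q x y + discrepancy p q y x = (G + 1) * real (hamd x y)"
    if "x \<in> C" "y \<in> C" for x y
  proof -
    have l: "length x = length y" using len that by simp
    have "discrepancy p q x y + discrepancy p q y x
       = G * (real (dab True False x y) + real (dab False True x y)) + (real (dab True False x y) + real (dab False True x y))"
      unfolding discrepancy_def G_def using dab_swap[OF l] dab_swap[OF l[symmetric]] by (simp add: algebra_simps)
    also have "real (dab True False x y) + real (dab False True x y) = real (hamd x y)"
      using hamd_dab[OF l] by (metis of_nat_add)
    finally show ?thesis by (simp add: algebra_simps)
  qed
  have dpos: "\<delta> > 0"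
  proof -
    have "\<delta> \<in> (\<lambda>(x, x'). discrepancy p q x x') ` P" unfolding dd using fP ne by (intro Min_in) auto
    then obtain x y where xy: "x \<in> C" "y \<in> C" "x \<noteq> y" "\<delta> = discrepancy p q x y" unfolding P_def by auto
    have l: "length x = length y" using len xy by simp
    have h1: "hamd x y \<ge> 1" using hamd_pos[OF l xy(3)] .
    have "real (dab True False x y) + real (dab False True x y) = real (hamd x y)"
      using hamd_dab[OF l] by (metis of_nat_add)
    moreover have "G * real (dab True False x y) \<ge> real (dab True False x y)" using G1
      by (simp add: mult_le_cancel_right1)
    ultimately have "discrepancy p q x y \<ge> real (hamd x y)"
      unfolding discrepancy_def G_def[symmetric] by linarith
    then show ?thesis using xy h1 by linarith
  qed
  define D where "D = 2 * \<delta> / (G + 1)"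
  have Dpos: "D > 0" unfolding D_def using dpos G1 by simp
  have Dle: "D \<le> real (hamd x y)" if "x \<in> C" "y \<in> C" "x \<noteq> y" for x y
  proof -
    have "2 * \<delta> \<le> (G + 1) * real (hamd x y)"
      using dle[OF that] dle[of y x] that dsum[of x y] by auto
    then show ?thesis unfolding D_def using G1 by (simp add: divide_simps mult.commute)
  qed
  define d where "d = \<lceil>D\<rceil>"
  have d1: "d \<ge> 1"
  proof -
    have "real_of_int d > 0" unfolding d_def using le_of_int_ceiling[of D] Dpos by linarith
    then show ?thesis by simp
  qed
  have dle_h: "d \<le> int (hamd x y)" if "x \<in> C" "y \<in> C" "x \<noteq> y" for x y
    unfolding d_def using Dle[OF that] by (simp add: ceiling_le_iff)
  have dn: "d \<le> int n"
    using dle_h[OF xy0] hamd_le[of x0 y0] len[OF xy0(1)] by linarith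
  have part1: "real (card C) \<le> 2 powr (real n - of_int d + 1)"
  proof -
    have "card C \<le> 2 ^ (n + 1 - nat d)"
      using singleton_bound[OF hC, of "nat d"] d1 dn dle_h by fastforce
    then have "real (card C) \<le> 2 ^ (n + 1 - nat d)" by (metis numeral_power_le_of_nat_cancel_iff of_nat_numeral of_nat_power of_nat_le_iff)
    also have "(2::real) ^ (n + 1 - nat d) = 2 powr (real (n + 1 - nat d))" by (simp add: powr_realpow)
    also have "real (n + 1 - nat d) = real n - of_int d + 1" using d1 dn by (simp add: of_nat_diff)
    finally show ?thesis .
  qed
  have part2: "real (card C) \<le> 2 ^ n / (\<Sum>i=0..nat t. real (n choose i))"
    if t: "t < \<delta> / (G + 1)" and tmax: "\<forall>s::int. s < \<delta> / (G + 1) \<longrightarrow> s \<le> t" for t :: int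
  proof -
    have t0: "0 \<le> t" using tmax[rule_format, of 0] dpos G1 by simp
    have "card C * (\<Sum>i=0..nat t. n choose i) \<le> 2 ^ n"
    proof (rule hamming_bound[OF hC])
      fix x y assume xy: "x \<in> C" "y \<in> C" "x \<noteq> y"
      have "2 * real_of_int t < D" using t G1 unfolding D_def by (simp add: divide_simps)
      then have "2 * real_of_int t < real (hamd x y)" using Dle[OF xy] by linarith
      then show "2 * nat t < hamd x y" using t0 by linarith
    qed
    then have "real (card C) * (\<Sum>i=0..nat t. real (n choose i)) \<le> 2 ^ n"
      by (metis (mono_tags) of_nat_le_iff of_nat_mult of_nat_numeral of_nat_power of_nat_sum)
    moreover have "(\<Sum>i=0..nat t. real (n choose i)) > 0"
      by (rule sum_pos2[of _ 0]) auto
    ultimately show ?thesis by (simp add: pos_le_divide_eq)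
  qed
  have part3: "real (card C) \<le> of_int \<lfloor>real_of_int (2 * d) / real_of_int (2 * d - int n)\<rfloor>"
    if d2: "2 * d > int n"
  proof -
    define M where "M = real (card C)"
    have M2: "M \<ge> 2" using hC2 unfolding M_def by simp
    have "M * (M - 1) * of_int d \<le> real n * M ^ 2 / 2"
      unfolding M_def by (rule plotkin_bound[OF hC]) (metis dle_h of_int_le_iff of_int_of_nat_eq)
    then have "M * ((M - 1) * of_int d) \<le> M * (real n * M / 2)" by (simp add: power2_eq_square algebra_simps)
    then have "(M - 1) * of_int d \<le> real n * M / 2" using M2 by simp
    then have "M * (2 * of_int d - real n) \<le> 2 * of_int d" by (simp add: algebra_simps)
    moreover have "2 * of_int d - real n > 0" using d2 by linarith
    ultimately have "M \<le> real_of_int (2 * d) / real_of_int (2 * d - int n)"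
      by (simp add: pos_le_divide_eq)
    then have "int (card C) \<le> \<lfloor>real_of_int (2 * d) / real_of_int (2 * d - int n)\<rfloor>"
      unfolding M_def by (simp add: le_floor_iff)
    then show ?thesis by (metis of_int_le_iff of_int_of_nat_eq)
  qed
  show ?thesis
    unfolding G_def[symmetric] \<delta>_def[symmetric] D_def[symmetric] d_def[symmetric] Let_def
    using part1 part2 part3 by blast
qed

end
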